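(* Let $G$ be a finite group, let $A$ be a subgroup of $G$, and let $W$ be a subgroup of a finitely generated group $F$ such that the subgroup $WF'$ has infinite index in $F$. Then the order $|N(A)|$ of the normaliser of $A$ in $G$ divides each of the following numbers: a) the number of homomorphisms $\varphi: F\to G$ such that the restriction of $\varphi$ to $W$ is injective and $\varphi(W)\subseteq A$; b) the number of homomorphisms $\varphi: F\to G$ such that the restriction of $\varphi$ to $W$ is injective and $\varphi(W)=A$.
   Context: $F'$ denotes the commutator subgroup of $F$; $N(A)$ is the normaliser of $A$ in $G$. *)

theory Defs
  imports "HOL-Algebra.Algebra"
begin

definition finitely_generated_group :: "('a, 'b) monoid_scheme \<Rightarrow> bool" where
  "finitely_generated_group F \<longleftrightarrow>
     group F \<and> (\<exists>S. finite S \<and> S \<subseteq> carrier F \<and> generate F S = carrier F)"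

end

theory Submission
  imports Defs
begin


lemma (in group) orbit_card:
  assumes HG: "subgroup H G" and fH: "finite H"
    and cl: "\<And>n r. n \<in> H \<Longrightarrow> r \<in> R \<Longrightarrow> act n r \<in> R"
    and one: "\<And>r. r \<in> R \<Longrightarrow> act \<one> r = r"
    and mult: "\<And>n m r. n\<in>H \<Longrightarrow> m\<in>H \<Longrightarrow> r\<in>R \<Longrightarrow> act (n \<otimes> m) r = act n (act m r)"
    and r: "r \<in> R"
  shows "card H = card ((\<lambda>n. act n r) ` H) * card {n\<in>H. act n r = r}"
proof -
  let ?O = "(\<lambda>n. act n r) ` H"
  let ?S = "{n\<in>H. act n r = r}"
  have Hc: "H \<subseteq> carrier G" using HG subgroup.subset by blast
  have fin: "finite ?O" using fH by simp
  have e: "H = (\<Union>y\<in>?O. {n\<in>H. act n r = y})" by auto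
  have "card (\<Union>y\<in>?O. {n\<in>H. act n r = y}) = (\<Sum>y\<in>?O. card {n\<in>H. act n r = y})"
  proof (rule card_UN_disjoint[OF fin])
    show "\<forall>y\<in>?O. finite {n\<in>H. act n r = y}" using fH by (intro ballI finite_subset[OF _ fH]) blast
    show "\<forall>i\<in>?O. \<forall>j\<in>?O. i \<noteq> j \<longrightarrow> {n\<in>H. act n r = i} \<inter> {n\<in>H. act n r = j} = {}" by blast
  qed
  hence "card H = (\<Sum>y\<in>?O. card {n\<in>H. act n r = y})" using e by simp
  also have "\<dots> = (\<Sum>y\<in>?O. card ?S)"
  proof (rule sum.cong[OF refl])
    fix y assume "y \<in> ?O"
    then obtain m where m: "m \<in> H" "y = act m r" by auto
    have mc: "m \<in> carrier G" using m Hc by auto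
    have "bij_betw (\<lambda>s. m \<otimes> s) ?S {n\<in>H. act n r = y}"
    proof (rule bij_betw_byWitness[where f'="\<lambda>n. inv m \<otimes> n"])
      show "\<forall>a\<in>?S. inv m \<otimes> (m \<otimes> a) = a"
      proof
        fix a assume "a \<in> ?S" hence "a \<in> carrier G" using Hc by auto
        thus "inv m \<otimes> (m \<otimes> a) = a" using mc by (simp add: m_assoc[symmetric])
      qed
      show "\<forall>a\<in>{n\<in>H. act n r = y}. m \<otimes> (inv m \<otimes> a) = a"
      proof
        fix a assume "a \<in> {n\<in>H. act n r = y}" hence "a \<in> carrier G" using Hc by auto
        thus "m \<otimes> (inv m \<otimes> a) = a" using mc by (simp add: m_assoc[symmetric])
      qed
      show "(\<lambda>s. m \<otimes> s) ` ?S \<subseteq> {n\<in>H. act n r = y}"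
        using m mult r subgroup.m_closed[OF HG] by auto
      show "(\<lambda>n. inv m \<otimes> n) ` {n\<in>H. act n r = y} \<subseteq> ?S"
      proof
        fix x assume "x \<in> (\<lambda>n. inv m \<otimes> n) ` {n\<in>H. act n r = y}"
        then obtain n where n: "n \<in> H" "act n r = y" "x = inv m \<otimes> n" by auto
        have im: "inv m \<in> H" using subgroup.m_inv_closed[OF HG m(1)] .
        have "act x r = act (inv m) (act n r)" using n mult im r by simp
        also have "\<dots> = act (inv m) (act m r)" using n m by simp
        also have "\<dots> = act (inv m \<otimes> m) r" using mult im m r by simp
        also have "\<dots> = r" using one r mc by simp
        finally show "x \<in> ?S" using n im subgroup.m_closed[OF HG] by auto
      qed
    qed
    thus "card {n\<in>H. act n r = y} = card ?S" by (simp add: bij_betw_same_card)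
  qed
  also have "\<dots> = card ?O * card ?S" by simp
  finally show ?thesis .
qed

lemma (in group) orbit_sum_dvd_aux:
  assumes HG: "subgroup H G" and fH: "finite H"
    and one: "\<And>r. r \<in> R0 \<Longrightarrow> act \<one> r = r"
    and mult: "\<And>n m r. n\<in>H \<Longrightarrow> m\<in>H \<Longrightarrow> r \<in> R0 \<Longrightarrow> act (n \<otimes> m) r = act n (act m r)"
    and winv: "\<And>n r. n\<in>H \<Longrightarrow> r \<in> R0 \<Longrightarrow> w (act n r) = w r"
    and stab: "\<And>r. r \<in> R0 \<Longrightarrow> card {n\<in>H. act n r = r} dvd w r"
  shows "finite R \<Longrightarrow> R \<subseteq> R0 \<Longrightarrow> (\<forall>n\<in>H. \<forall>r\<in>R. act n r \<in> R) \<Longrightarrow> card H dvd sum w R"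
proof (induction R rule: finite_psubset_induct)
  case (psubset R)
  show ?case
  proof (cases "R = {}")
    case True thus ?thesis by simp
  next
    case False
    then obtain r where r: "r \<in> R" by auto
    have r0: "r \<in> R0" using r psubset.prems by auto
    let ?O = "(\<lambda>n. act n r) ` H"
    let ?S = "{n\<in>H. act n r = r}"
    have Hc: "H \<subseteq> carrier G" using subgroup.subset[OF HG] .
    have OR: "?O \<subseteq> R" using psubset.prems r by auto
    have one_H: "\<one> \<in> H" using subgroup.one_closed[OF HG] .
    have rO: "r \<in> ?O" using one[OF r0] one_H by (metis image_eqI)
    have cl': "\<forall>n\<in>H. \<forall>x\<in>R - ?O. act n x \<in> R - ?O"
    proof (intro ballI)
      fix n x assume n: "n \<in> H" and x: "x \<in> R - ?O"
      have x0: "x \<in> R0" using x psubset.prems by auto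
      have "act n x \<notin> ?O"
      proof
        assume "act n x \<in> ?O"
        then obtain m where m: "m \<in> H" "act n x = act m r" by auto
        have im: "inv n \<in> H" using subgroup.m_inv_closed[OF HG n] .
        have nc: "n \<in> carrier G" using n Hc by auto
        have "x = act (inv n \<otimes> n) x" using one[OF x0] nc by simp
        also have "\<dots> = act (inv n) (act m r)" using mult[OF im n x0] m by simp
        also have "\<dots> = act (inv n \<otimes> m) r" using mult[OF im m(1) r0] by simp
        finally have "x \<in> ?O" using subgroup.m_closed[OF HG im m(1)] by blast
        thus False using x by blast
      qed
      thus "act n x \<in> R - ?O" using psubset.prems n x by blast
    qed
    have sub: "R - ?O \<subset> R" using rO r by blast
    have IH: "card H dvd sum w (R - ?O)"
      using psubset.IH[OF sub] cl' psubset.prems by blast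
    have "sum w R = sum w ?O + sum w (R - ?O)"
      using OR psubset.hyps by (metis add.commute sum.subset_diff)
    moreover have "sum w ?O = card ?O * w r"
    proof -
      have "sum w ?O = sum (\<lambda>_. w r) ?O"
      proof (rule sum.cong[OF refl])
        fix y assume "y \<in> ?O"
        then obtain n where "n \<in> H" "y = act n r" by blast
        thus "w y = w r" using winv[OF _ r0] by simp
      qed
      thus ?thesis by simp
    qed
    moreover have "card H = card ?O * card ?S"
    proof (rule orbit_card[OF HG fH, of R act r])
      show "\<And>n r. n \<in> H \<Longrightarrow> r \<in> R \<Longrightarrow> act n r \<in> R" using psubset.prems by blast
      show "\<And>r. r \<in> R \<Longrightarrow> act \<one> r = r" using one psubset.prems by blast
      show "\<And>n m ra. n \<in> H \<Longrightarrow> m \<in> H \<Longrightarrow> ra \<in> R \<Longrightarrow> act (n \<otimes> m) ra = act n (act m ra)"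
        using mult psubset.prems by blast
      show "r \<in> R" by fact
    qed
    moreover obtain q where "w r = card ?S * q" using stab[OF r0] by (meson dvdE)
    ultimately have "sum w R = card H * q + sum w (R - ?O)" by simp
    thus ?thesis using IH by simp
  qed
qed

lemma (in group) orbit_sum_dvd:
  assumes HG: "subgroup H G" and fH: "finite H" and fR: "finite R"
    and cl: "\<And>n r. n \<in> H \<Longrightarrow> r \<in> R \<Longrightarrow> act n r \<in> R"
    and one: "\<And>r. r \<in> R \<Longrightarrow> act \<one> r = r"
    and mult: "\<And>n m r. n\<in>H \<Longrightarrow> m\<in>H \<Longrightarrow> r \<in> R \<Longrightarrow> act (n \<otimes> m) r = act n (act m r)"
    and winv: "\<And>n r. n\<in>H \<Longrightarrow> r \<in> R \<Longrightarrow> w (act n r) = w r"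
    and stab: "\<And>r. r \<in> R \<Longrightarrow> card {n\<in>H. act n r = r} dvd w r"
  shows "card H dvd sum w R"
  using orbit_sum_dvd_aux[OF HG fH, of R act w R] assms by blast




context group begin

lemma cancel_simps1 [simp]:
  "x \<in> carrier G \<Longrightarrow> y \<in> carrier G \<Longrightarrow> inv x \<otimes> (x \<otimes> y) = y"
  "x \<in> carrier G \<Longrightarrow> y \<in> carrier G \<Longrightarrow> x \<otimes> (inv x \<otimes> y) = y"
  by (simp_all add: m_assoc[symmetric])

lemma comm_in_derived:
  "x \<in> carrier G \<Longrightarrow> y \<in> carrier G \<Longrightarrow> x \<otimes> y \<otimes> inv x \<otimes> inv y \<in> derived G (carrier G)"
  unfolding derived_def by (rule generate.incl) blast

lemma conj_in_sub:
  assumes H: "subgroup H G" and D: "derived G (carrier G) \<subseteq> H" and x: "x \<in> carrier G" and h: "h \<in> H"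
  shows "x \<otimes> h \<otimes> inv x \<in> H"
proof -
  have hc: "h \<in> carrier G" using h subgroup.subset[OF H] by auto
  have "x \<otimes> h \<otimes> inv x = (x \<otimes> h \<otimes> inv x \<otimes> inv h) \<otimes> h" using x hc by (simp add: m_assoc)
  moreover have c: "x \<otimes> h \<otimes> inv x \<otimes> inv h \<in> H" using comm_in_derived[OF x hc] D by auto
  ultimately show ?thesis using subgroup.m_closed[OF H c h] by metis
qed

lemma sub_nat_pow: "subgroup H G \<Longrightarrow> h \<in> H \<Longrightarrow> h [^] (n::nat) \<in> H"
  by (induction n) (auto simp: subgroup.one_closed subgroup.m_closed)

definition addh :: "'a set \<Rightarrow> ('a \<Rightarrow> int) \<Rightarrow> bool" where
  "addh H \<psi> \<longleftrightarrow> (\<forall>x\<in>H. \<forall>y\<in>H. \<psi> (x \<otimes> y) = \<psi> x + \<psi> y)"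

lemma addh_one: "subgroup H G \<Longrightarrow> addh H \<psi> \<Longrightarrow> \<psi> \<one> = 0"
  unfolding addh_def using subgroup.one_closed[of H G] by (metis add_cancel_right_right l_one one_closed)

lemma addh_inv: "subgroup H G \<Longrightarrow> addh H \<psi> \<Longrightarrow> h \<in> H \<Longrightarrow> \<psi> (inv h) = - \<psi> h"
proof -
  assume H: "subgroup H G" and a: "addh H \<psi>" and h: "h \<in> H"
  have "\<psi> (h \<otimes> inv h) = \<psi> h + \<psi> (inv h)" using a h subgroup.m_inv_closed[OF H h] unfolding addh_def by blast
  moreover have "h \<otimes> inv h = \<one>" using h subgroup.subset[OF H] by auto
  ultimately show ?thesis using addh_one[OF H a] by simp
qed

lemma addh_nat_pow: "subgroup H G \<Longrightarrow> addh H \<psi> \<Longrightarrow> h \<in> H \<Longrightarrow> \<psi> (h [^] (n::nat)) = int n * \<psi> h"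
proof (induction n)
  case 0 thus ?case using addh_one by simp
next
  case (Suc n)
  have "h [^] n \<in> H" using sub_nat_pow[OF Suc.prems(1,3)] .
  hence "\<psi> (h [^] Suc n) = \<psi> (h [^] n) + \<psi> h" using Suc.prems unfolding addh_def by simp
  thus ?case using Suc by (simp add: distrib_right)
qed

lemma addh_pow: "subgroup H G \<Longrightarrow> addh H \<psi> \<Longrightarrow> h \<in> H \<Longrightarrow> \<psi> (h [^] (j::int)) = j * \<psi> h"
proof (cases "j < 0")
  case True
  assume H: "subgroup H G" and a: "addh H \<psi>" and h: "h \<in> H"
  have hc: "h \<in> carrier G" using h subgroup.subset[OF H] by auto
  have jj: "j = - int (nat (-j))" using True by simp
  have e: "h [^] j = inv (h [^] nat (-j))" by (subst jj) (rule int_pow_neg_int[OF hc])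
  have "h [^] nat (-j) \<in> H" using sub_nat_pow[OF H h] .
  thus ?thesis using e addh_inv[OF H a] addh_nat_pow[OF H a h, of "nat (-j)"] True by simp
next
  case False
  assume H: "subgroup H G" and a: "addh H \<psi>" and h: "h \<in> H"
  have jj: "j = int (nat j)" using False by simp
  have "h [^] j = h [^] nat j" by (subst jj) (rule int_pow_int)
  thus ?thesis using False addh_nat_pow[OF H a h, of "nat j"] by simp
qed

lemma addh_conj:
  assumes H: "subgroup H G" and D: "derived G (carrier G) \<subseteq> N" and NH: "N \<subseteq> H"
    and a: "addh H \<psi>" and N0: "\<forall>n\<in>N. \<psi> n = 0" and x: "x \<in> carrier G" and h: "h \<in> H"
  shows "\<psi> (x \<otimes> h \<otimes> inv x) = \<psi> h"
proof -
  have hc: "h \<in> carrier G" using h subgroup.subset[OF H] by auto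
  have e: "x \<otimes> h \<otimes> inv x = (x \<otimes> h \<otimes> inv x \<otimes> inv h) \<otimes> h" using x hc by (simp add: m_assoc)
  have c: "x \<otimes> h \<otimes> inv x \<otimes> inv h \<in> N" using comm_in_derived[OF x hc] D by auto
  show ?thesis using e c NH a h N0 unfolding addh_def by (metis add_0 subsetD)
qed


definition ext_set :: "'a set \<Rightarrow> 'a \<Rightarrow> 'a set" where
  "ext_set H s = {h \<otimes> s [^] (j::int) | h j. h \<in> H}"

lemma prod_ident:
  assumes "h \<in> carrier G" "h' \<in> carrier G" "s \<in> carrier G"
  shows "(h \<otimes> s [^] (i::int)) \<otimes> (h' \<otimes> s [^] (j::int)) = (h \<otimes> (s [^] i \<otimes> h' \<otimes> inv (s [^] i))) \<otimes> s [^] (i + j)"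
  using assms by (simp add: m_assoc int_pow_mult)

lemma ext_set_subgroup:
  assumes H: "subgroup H G" and D: "derived G (carrier G) \<subseteq> H" and s: "s \<in> carrier G"
  shows "subgroup (ext_set H s) G"
proof (rule subgroupI)
  have Hc: "H \<subseteq> carrier G" using subgroup.subset[OF H] .
  show "ext_set H s \<subseteq> carrier G" unfolding ext_set_def using Hc s by auto
  have "\<one> \<otimes> s [^] (0::int) \<in> ext_set H s" unfolding ext_set_def using subgroup.one_closed[OF H] by blast
  thus "ext_set H s \<noteq> {}" by auto
  fix x y assume x: "x \<in> ext_set H s"
  then obtain h i where h: "h \<in> H" and xe: "x = h \<otimes> s [^] (i::int)" unfolding ext_set_def by blast
  have hc: "h \<in> carrier G" using h Hc by auto
  let ?u = "s [^] (- i)"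
  have uc: "?u \<in> carrier G" using s by simp
  have "inv x = (?u \<otimes> inv h \<otimes> inv ?u) \<otimes> ?u"
    using xe hc s by (simp add: m_assoc inv_mult_group int_pow_neg)
  moreover have "?u \<otimes> inv h \<otimes> inv ?u \<in> H" using conj_in_sub[OF H D uc subgroup.m_inv_closed[OF H h]] .
  ultimately show "inv x \<in> ext_set H s" unfolding ext_set_def by blast
  assume y: "y \<in> ext_set H s"
  then obtain h' j where h': "h' \<in> H" and ye: "y = h' \<otimes> s [^] (j::int)" unfolding ext_set_def by blast
  have hc': "h' \<in> carrier G" using h' Hc by auto
  have "x \<otimes> y = (h \<otimes> (s [^] i \<otimes> h' \<otimes> inv (s [^] i))) \<otimes> s [^] (i + j)"
    using prod_ident[OF hc hc' s] xe ye by simp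
  moreover have "h \<otimes> (s [^] i \<otimes> h' \<otimes> inv (s [^] i)) \<in> H"
    using subgroup.m_closed[OF H h conj_in_sub[OF H D _ h']] s by simp
  ultimately show "x \<otimes> y \<in> ext_set H s" unfolding ext_set_def by blast
qed

lemma ext_set_generate:
  assumes Xs: "Xs \<subseteq> carrier G" and D: "derived G (carrier G) \<subseteq> generate G Xs" and s: "s \<in> carrier G"
  shows "generate G (insert s Xs) = ext_set (generate G Xs) s"
proof
  have H: "subgroup (generate G Xs) G" using generate_is_subgroup[OF Xs] .
  show "generate G (insert s Xs) \<subseteq> ext_set (generate G Xs) s"
  proof (rule generate_subgroup_incl[OF _ ext_set_subgroup[OF H D s]])
    show "insert s Xs \<subseteq> ext_set (generate G Xs) s"
    proof
      fix x assume "x \<in> insert s Xs"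
      then consider "x = s" | "x \<in> Xs" by blast
      thus "x \<in> ext_set (generate G Xs) s"
      proof cases
        case 1
        have "x = \<one> \<otimes> s [^] (1::int)" using 1 s by simp
        thus ?thesis unfolding ext_set_def using generate.one by blast
      next
        case 2
        have "x = x \<otimes> s [^] (0::int)" using 2 Xs by auto
        thus ?thesis unfolding ext_set_def using generate.incl[OF 2] by blast
      qed
    qed
  qed
  show "ext_set (generate G Xs) s \<subseteq> generate G (insert s Xs)"
  proof
    fix x assume "x \<in> ext_set (generate G Xs) s"
    then obtain h j where h: "h \<in> generate G Xs" and xe: "x = h \<otimes> s [^] (j::int)" unfolding ext_set_def by blast
    have Xs': "insert s Xs \<subseteq> carrier G" using Xs s by auto
    have H': "subgroup (generate G (insert s Xs)) G" using generate_is_subgroup[OF Xs'] .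
    have "h \<in> generate G (insert s Xs)" using mono_generate[of Xs "insert s Xs"] h by blast
    moreover have "s \<in> generate G (insert s Xs)" by (rule generate.incl) simp
    hence "s [^] j \<in> generate G (insert s Xs)"
      using subgroup_int_pow_closed[OF H'] by blast
    ultimately show "x \<in> generate G (insert s Xs)" using xe subgroup.m_closed[OF H'] by blast
  qed
qed

lemma extend_psi:
  assumes H: "subgroup H G" and D: "derived G (carrier G) \<subseteq> N" and NH: "N \<subseteq> H"
    and a: "addh H \<psi>" and N0: "\<forall>n\<in>N. \<psi> n = 0" and s: "s \<in> carrier G"
    and cons: "\<And>h h' j j'. h \<in> H \<Longrightarrow> h' \<in> H \<Longrightarrow> h \<otimes> s [^] (j::int) = h' \<otimes> s [^] (j'::int) \<Longrightarrow>
                A * \<psi> h + j * B = A * \<psi> h' + j' * B"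
  shows "\<exists>\<psi>'. addh (ext_set H s) \<psi>' \<and> (\<forall>h\<in>H. \<forall>j. \<psi>' (h \<otimes> s [^] (j::int)) = A * \<psi> h + j * B)"
proof -
  have Hc: "H \<subseteq> carrier G" using subgroup.subset[OF H] .
  define \<psi>' where "\<psi>' x = (SOME v. \<exists>h\<in>H. \<exists>j::int. x = h \<otimes> s [^] j \<and> v = A * \<psi> h + j * B)" for x
  have val: "\<psi>' (h \<otimes> s [^] j) = A * \<psi> h + j * B" if h: "h \<in> H" for h j
  proof -
    let ?P = "\<lambda>v. \<exists>h'\<in>H. \<exists>j'::int. h \<otimes> s [^] j = h' \<otimes> s [^] j' \<and> v = A * \<psi> h' + j' * B"
    have "?P (A * \<psi> h + j * B)" using h by blast
    hence "?P (\<psi>' (h \<otimes> s [^] j))" unfolding \<psi>'_def by (rule someI)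
    then obtain h' j' where h': "h' \<in> H" and e: "h \<otimes> s [^] j = h' \<otimes> s [^] j'"
      and v: "\<psi>' (h \<otimes> s [^] j) = A * \<psi> h' + j' * B" by blast
    show ?thesis using v cons[OF h h' e] by simp
  qed
  have D': "derived G (carrier G) \<subseteq> H" using D NH by auto
  have "addh (ext_set H s) \<psi>'"
    unfolding addh_def
  proof (intro ballI)
    fix x y assume x: "x \<in> ext_set H s" and y: "y \<in> ext_set H s"
    obtain h i where h: "h \<in> H" and xe: "x = h \<otimes> s [^] (i::int)" using x unfolding ext_set_def by blast
    obtain h' j where h': "h' \<in> H" and ye: "y = h' \<otimes> s [^] (j::int)" using y unfolding ext_set_def by blast
    have hc: "h \<in> carrier G" and hc': "h' \<in> carrier G" using h h' Hc by auto
    have si: "s [^] i \<in> carrier G" using s by simp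
    have c: "s [^] i \<otimes> h' \<otimes> inv (s [^] i) \<in> H" using conj_in_sub[OF H D' si h'] .
    have "x \<otimes> y = (h \<otimes> (s [^] i \<otimes> h' \<otimes> inv (s [^] i))) \<otimes> s [^] (i + j)"
      using prod_ident[OF hc hc' s] xe ye by simp
    hence "\<psi>' (x \<otimes> y) = A * \<psi> (h \<otimes> (s [^] i \<otimes> h' \<otimes> inv (s [^] i))) + (i + j) * B"
      using val subgroup.m_closed[OF H h c] by simp
    also have "\<psi> (h \<otimes> (s [^] i \<otimes> h' \<otimes> inv (s [^] i))) = \<psi> h + \<psi> h'"
      using a h c addh_conj[OF H D NH a N0 si h'] unfolding addh_def by simp
    finally show "\<psi>' (x \<otimes> y) = \<psi>' x + \<psi>' y"
      using val[OF h, of i] val[OF h', of j] xe ye by (simp add: algebra_simps)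
  qed
  thus ?thesis using val by blast
qed


lemma eq_diff_pow:
  assumes H: "subgroup H G" and s: "s \<in> carrier G" and h: "h \<in> H" and h': "h' \<in> H"
    and e: "h \<otimes> s [^] (j::int) = h' \<otimes> s [^] (j'::int)"
  shows "inv h' \<otimes> h = s [^] (j' - j)"
proof -
  have hc: "h \<in> carrier G" and hc': "h' \<in> carrier G" using h h' subgroup.subset[OF H] by auto
  have "inv h' \<otimes> h = inv h' \<otimes> (h \<otimes> s [^] j) \<otimes> inv (s [^] j)" using hc hc' s by (simp add: m_assoc)
  also have "\<dots> = inv h' \<otimes> (h' \<otimes> s [^] j') \<otimes> inv (s [^] j)" using e by simp
  also have "\<dots> = s [^] j' \<otimes> inv (s [^] j)" using hc hc' s by (simp add: m_assoc)
  also have "\<dots> = s [^] (j' - j)" using int_pow_diff[OF s] by simp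
  finally show ?thesis .
qed

lemma cons_free:
  assumes H: "subgroup H G" and s: "s \<in> carrier G" and nopow: "\<forall>m::nat. m > 0 \<longrightarrow> s [^] m \<notin> H"
    and h: "h \<in> H" and h': "h' \<in> H" and e: "h \<otimes> s [^] (j::int) = h' \<otimes> s [^] (j'::int)"
  shows "j = j' \<and> h = h'"
proof -
  have u: "s [^] (j' - j) \<in> H" using eq_diff_pow[OF H s h h' e] subgroup.m_closed[OF H subgroup.m_inv_closed[OF H h'] h] by simp
  have "j' - j = 0"
  proof (rule ccontr)
    assume ne: "j' - j \<noteq> 0"
    show False
    proof (cases "j' - j > 0")
      case True
      have jj: "j' - j = int (nat (j' - j))" using True by simp
      have "s [^] (j' - j) = s [^] (nat (j' - j))" by (subst jj) (rule int_pow_int)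
      hence "s [^] (nat (j' - j)) \<in> H" using u by simp
      moreover have "nat (j' - j) > 0" using True by simp
      ultimately show False using nopow by blast
    next
      case False
      hence pos: "j - j' > 0" using ne by simp
      have "inv (s [^] (j' - j)) = s [^] (j - j')" using int_pow_neg[OF s, of "j' - j"] by simp
      also have "\<dots> = s [^] (nat (j - j'))"
      proof -
        have jj: "j - j' = int (nat (j - j'))" using pos by simp
        show ?thesis by (subst jj) (rule int_pow_int)
      qed
      finally have "s [^] (nat (j - j')) \<in> H" using subgroup.m_inv_closed[OF H u] by simp
      moreover have "nat (j - j') > 0" using pos by simp
      ultimately show False using nopow by blast
    qed
  qed
  hence jj: "j = j'" by simp
  have hc: "h \<in> carrier G" and hc': "h' \<in> carrier G" using h h' subgroup.subset[OF H] by auto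
  have "h = h'" using e jj hc hc' s by (metis int_pow_closed r_cancel_one' right_cancel)
  thus ?thesis using jj by simp
qed

lemma cons_pow:
  assumes H: "subgroup H G" and s: "s \<in> carrier G" and m: "m > (0::nat)" and sm: "s [^] m \<in> H"
    and a: "addh H \<psi>"
    and h: "h \<in> H" and h': "h' \<in> H" and e: "h \<otimes> s [^] (j::int) = h' \<otimes> s [^] (j'::int)"
  shows "int m * \<psi> h + j * \<psi> (s [^] m) = int m * \<psi> h' + j' * \<psi> (s [^] m)"
proof -
  let ?u = "inv h' \<otimes> h"
  have ue: "?u = s [^] (j' - j)" using eq_diff_pow[OF H s h h' e] .
  have uH: "?u \<in> H" using subgroup.m_closed[OF H subgroup.m_inv_closed[OF H h'] h] .
  have hc: "h \<in> carrier G" and hc': "h' \<in> carrier G" using h h' subgroup.subset[OF H] by auto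
  have "h' \<otimes> ?u = h" using hc hc' by simp
  hence pu: "\<psi> h = \<psi> h' + \<psi> ?u" using a h' uH unfolding addh_def by metis
  have smi: "s [^] (int m) = s [^] m" by (rule int_pow_int)
  have "int m * \<psi> ?u = \<psi> (?u [^] (int m))" using addh_pow[OF H a uH] by simp
  also have "?u [^] (int m) = s [^] ((j' - j) * int m)" using ue int_pow_pow[OF s] by simp
  also have "\<dots> = (s [^] (int m)) [^] (j' - j)" using int_pow_pow[OF s] by (simp add: mult.commute)
  also have "\<psi> \<dots> = (j' - j) * \<psi> (s [^] m)" using addh_pow[OF H a sm] smi by simp
  finally have "int m * \<psi> ?u = (j' - j) * \<psi> (s [^] m)" .
  thus ?thesis using pu by (simp add: algebra_simps)
qed


lemma Zmap_ind:
  assumes N: "subgroup N G" and D: "derived G (carrier G) \<subseteq> N"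
  shows "finite S \<Longrightarrow> S \<subseteq> carrier G \<Longrightarrow>
    (\<exists>T. finite T \<and> T \<subseteq> carrier G \<and> generate G (S \<union> N) \<subseteq> (\<Union>t\<in>T. N #> t)) \<or>
    (\<exists>\<psi>. addh (generate G (S \<union> N)) \<psi> \<and> (\<forall>n\<in>N. \<psi> n = 0) \<and> (\<exists>x\<in>generate G (S \<union> N). \<psi> x \<noteq> 0))"
proof (induction S rule: finite_induct)
  case empty
  have Nc: "N \<subseteq> carrier G" using subgroup.subset[OF N] .
  have "generate G ({} \<union> N) \<subseteq> N" using generate_subgroup_incl[OF _ N] by simp
  also have "N = N #> \<one>" using Nc by simp
  finally have "generate G ({} \<union> N) \<subseteq> (\<Union>t\<in>{\<one>}. N #> t)" by simp
  thus ?case by blast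
next
  case (insert s S)
  have s: "s \<in> carrier G" and Sc: "S \<subseteq> carrier G" using insert.prems by auto
  have Nc: "N \<subseteq> carrier G" using subgroup.subset[OF N] .
  let ?Y = "S \<union> N"
  let ?H = "generate G ?Y"
  have Yc: "?Y \<subseteq> carrier G" using Sc Nc by auto
  have Hs: "subgroup ?H G" using generate_is_subgroup[OF Yc] .
  have NH: "N \<subseteq> ?H" using generate.incl[of _ ?Y G] by blast
  have DH: "derived G (carrier G) \<subseteq> ?H" using D NH by auto
  have eH': "generate G (insert s S \<union> N) = ext_set ?H s"
    using ext_set_generate[OF Yc DH s] by simp
  have HH': "?H \<subseteq> ext_set ?H s"
  proof
    fix h assume h: "h \<in> ?H"
    have "h = h \<otimes> s [^] (0::int)" using h subgroup.subset[OF Hs] by auto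
    thus "h \<in> ext_set ?H s" unfolding ext_set_def using h by blast
  qed
  have zero_val: "\<And>\<psi>'. (\<forall>h\<in>?H. \<forall>j. \<psi>' (h \<otimes> s [^] (j::int)) = A * \<psi> h + j * B) \<Longrightarrow> h \<in> ?H \<Longrightarrow> \<psi>' h = A * \<psi> h"
    for A B \<psi> h
  proof -
    fix \<psi>' assume v: "\<forall>h\<in>?H. \<forall>j. \<psi>' (h \<otimes> s [^] (j::int)) = A * \<psi> h + j * B" and h: "h \<in> ?H"
    have "h = h \<otimes> s [^] (0::int)" using h subgroup.subset[OF Hs] by auto
    thus "\<psi>' h = A * \<psi> h" using v h by (metis add.right_neutral mult_zero_left)
  qed
  show ?case
  proof (cases "\<exists>m::nat. m > 0 \<and> s [^] m \<in> ?H")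
    case True
    then obtain m :: nat where m: "m > 0" and sm: "s [^] m \<in> ?H" by blast
    from insert.IH[OF Sc] show ?thesis
    proof
      assume "\<exists>T. finite T \<and> T \<subseteq> carrier G \<and> ?H \<subseteq> (\<Union>t\<in>T. N #> t)"
      then obtain T where fT: "finite T" and Tc: "T \<subseteq> carrier G" and HT: "?H \<subseteq> (\<Union>t\<in>T. N #> t)" by blast
      let ?T = "(\<lambda>p. fst p \<otimes> s [^] (snd p :: nat)) ` (T \<times> {..<m})"
      have "ext_set ?H s \<subseteq> (\<Union>t\<in>?T. N #> t)"
      proof
        fix x assume "x \<in> ext_set ?H s"
        then obtain h j where h: "h \<in> ?H" and xe: "x = h \<otimes> s [^] (j::int)" unfolding ext_set_def by blast
        define q where "q = j div int m"
        define r where "r = j mod int m"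
        have r0: "0 \<le> r" and rm: "r < int m" using m unfolding r_def by auto
        have jqr: "j = int m * q + r" unfolding q_def r_def by simp
        have smi: "s [^] (int m) = s [^] m" by (rule int_pow_int)
        have "s [^] j = (s [^] (int m)) [^] q \<otimes> s [^] r"
          using jqr int_pow_mult[OF s] int_pow_pow[OF s] by simp
        hence sj: "s [^] j = (s [^] m) [^] q \<otimes> s [^] (nat r)"
          using smi r0 by (metis int_nat_eq int_pow_int)
        have hq: "h \<otimes> (s [^] m) [^] q \<in> ?H"
          using subgroup.m_closed[OF Hs h subgroup_int_pow_closed[OF Hs sm]] .
        then obtain t where t: "t \<in> T" and ht: "h \<otimes> (s [^] m) [^] q \<in> N #> t" using HT by blast
        then obtain n where n: "n \<in> N" and hn: "h \<otimes> (s [^] m) [^] q = n \<otimes> t" unfolding r_coset_def by blast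
        have hc: "h \<in> carrier G" using h subgroup.subset[OF Hs] by auto
        have tc: "t \<in> carrier G" using t Tc by auto
        have nc: "n \<in> carrier G" using n Nc by auto
        have "x = (h \<otimes> (s [^] m) [^] q) \<otimes> s [^] (nat r)" using xe sj hc s by (simp add: m_assoc)
        also have "\<dots> = n \<otimes> (t \<otimes> s [^] (nat r))" using hn nc tc s by (simp add: m_assoc)
        finally have "x \<in> N #> (t \<otimes> s [^] (nat r))" unfolding r_coset_def using n by blast
        moreover have "t \<otimes> s [^] (nat r) \<in> ?T"
        proof -
          have "(t, nat r) \<in> T \<times> {..<m}" using t rm r0 by auto
          moreover have "t \<otimes> s [^] (nat r) = (\<lambda>p. fst p \<otimes> s [^] (snd p :: nat)) (t, nat r)" by simp
          ultimately show ?thesis by (rule rev_image_eqI)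
        qed
        ultimately show "x \<in> (\<Union>t\<in>?T. N #> t)" by blast
      qed
      moreover have "finite ?T" using fT by simp
      moreover have "?T \<subseteq> carrier G" using Tc s by auto
      ultimately have "\<exists>T. finite T \<and> T \<subseteq> carrier G \<and> generate G (insert s S \<union> N) \<subseteq> (\<Union>t\<in>T. N #> t)"
        unfolding eH' by blast
      thus ?thesis by (rule disjI1)
    next
      assume "\<exists>\<psi>. addh ?H \<psi> \<and> (\<forall>n\<in>N. \<psi> n = 0) \<and> (\<exists>x\<in>?H. \<psi> x \<noteq> 0)"
      then obtain \<psi> x0 where a: "addh ?H \<psi>" and N0: "\<forall>n\<in>N. \<psi> n = 0" and x0: "x0 \<in> ?H" "\<psi> x0 \<noteq> 0" by blast
      obtain \<psi>' where a': "addh (ext_set ?H s) \<psi>'"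
        and v: "\<forall>h\<in>?H. \<forall>j. \<psi>' (h \<otimes> s [^] (j::int)) = int m * \<psi> h + j * \<psi> (s [^] m)"
        using extend_psi[OF Hs D NH a N0 s cons_pow[OF Hs s m sm a]] by blast
      have "\<forall>n\<in>N. \<psi>' n = 0" using zero_val[OF v] NH N0 by auto
      moreover have "\<psi>' x0 \<noteq> 0" using zero_val[OF v x0(1)] x0 m by simp
      moreover have "addh (generate G (insert s S \<union> N)) \<psi>'" using a' eH' by simp
      moreover have "x0 \<in> generate G (insert s S \<union> N)" using eH' HH' x0 by blast
      ultimately show ?thesis by blast
    qed
  next
    case False
    hence nopow: "\<forall>m::nat. m > 0 \<longrightarrow> s [^] m \<notin> ?H" by blast
    have cons: "A * \<psi> h + j * B = A * \<psi> h' + j' * B"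
      if "h \<in> ?H" "h' \<in> ?H" "h \<otimes> s [^] (j::int) = h' \<otimes> s [^] (j'::int)" for A B and \<psi> :: "'a \<Rightarrow> int" and h h' j j'
      using cons_free[OF Hs s nopow that] by simp
    from insert.IH[OF Sc] show ?thesis
    proof
      assume "\<exists>T. finite T \<and> T \<subseteq> carrier G \<and> ?H \<subseteq> (\<Union>t\<in>T. N #> t)"
      have a: "addh ?H (\<lambda>_. 0)" unfolding addh_def by simp
      have N0z: "\<forall>n\<in>N. (\<lambda>_. 0::int) n = 0" by simp
      have "\<exists>\<psi>'. addh (ext_set ?H s) \<psi>' \<and> (\<forall>h\<in>?H. \<forall>j. \<psi>' (h \<otimes> s [^] (j::int)) = 0 * (\<lambda>_. 0::int) h + j * 1)"
      proof (rule extend_psi[OF Hs D NH a N0z s])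
        fix h h' j j' assume "h \<in> ?H" "h' \<in> ?H" "h \<otimes> s [^] (j::int) = h' \<otimes> s [^] (j'::int)"
        thus "0 * (\<lambda>_. 0::int) h + j * 1 = 0 * (\<lambda>_. 0::int) h' + j' * 1" using cons_free[OF Hs s nopow] by simp
      qed
      then obtain \<psi>' where a': "addh (ext_set ?H s) \<psi>'"
        and v: "\<forall>h\<in>?H. \<forall>j. \<psi>' (h \<otimes> s [^] (j::int)) = 0 * (\<lambda>_. 0::int) h + j * 1" by blast
      have "\<forall>n\<in>N. \<psi>' n = 0" using zero_val[OF v] NH by auto
      moreover have "\<psi>' (\<one> \<otimes> s [^] (1::int)) \<noteq> 0" using v subgroup.one_closed[OF Hs] by simp
      moreover have "\<one> \<otimes> s [^] (1::int) \<in> generate G (insert s S \<union> N)"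
        unfolding eH' ext_set_def using subgroup.one_closed[OF Hs] by blast
      moreover have "addh (generate G (insert s S \<union> N)) \<psi>'" using a' eH' by simp
      ultimately show ?thesis by blast
    next
      assume "\<exists>\<psi>. addh ?H \<psi> \<and> (\<forall>n\<in>N. \<psi> n = 0) \<and> (\<exists>x\<in>?H. \<psi> x \<noteq> 0)"
      then obtain \<psi> x0 where a: "addh ?H \<psi>" and N0: "\<forall>n\<in>N. \<psi> n = 0" and x0: "x0 \<in> ?H" "\<psi> x0 \<noteq> 0" by blast
      have "\<exists>\<psi>'. addh (ext_set ?H s) \<psi>' \<and> (\<forall>h\<in>?H. \<forall>j. \<psi>' (h \<otimes> s [^] (j::int)) = 1 * \<psi> h + j * 0)"
      proof (rule extend_psi[OF Hs D NH a N0 s])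
        fix h h' j j' assume hh: "h \<in> ?H" "h' \<in> ?H" "h \<otimes> s [^] (j::int) = h' \<otimes> s [^] (j'::int)"
        have "h = h'" using cons_free[OF Hs s nopow hh] by simp
        thus "1 * \<psi> h + j * 0 = 1 * \<psi> h' + j' * 0" by simp
      qed
      then obtain \<psi>' where a': "addh (ext_set ?H s) \<psi>'"
        and v: "\<forall>h\<in>?H. \<forall>j. \<psi>' (h \<otimes> s [^] (j::int)) = 1 * \<psi> h + j * 0" by blast
      have "\<forall>n\<in>N. \<psi>' n = 0" using zero_val[OF v] NH N0 by auto
      moreover have "\<psi>' x0 \<noteq> 0" using zero_val[OF v x0(1)] x0 by simp
      moreover have "addh (generate G (insert s S \<union> N)) \<psi>'" using a' eH' by simp
      moreover have "x0 \<in> generate G (insert s S \<union> N)" using eH' HH' x0 by blast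
      ultimately show ?thesis by blast
    qed
  qed
qed


lemma exists_psi:
  assumes fS: "finite S" and Sc: "S \<subseteq> carrier G" and gen: "generate G S = carrier G"
    and N: "subgroup N G" and D: "derived G (carrier G) \<subseteq> N" and inf: "infinite (rcosets N)"
  shows "\<exists>\<psi> t. (\<forall>x\<in>carrier G. \<forall>y\<in>carrier G. \<psi> (x \<otimes> y) = \<psi> x + \<psi> y) \<and> (\<forall>n\<in>N. \<psi> n = 0)
           \<and> t \<in> carrier G \<and> \<psi> t = (1::int)"
proof -
  have Nc: "N \<subseteq> carrier G" using subgroup.subset[OF N] .
  have gc: "generate G (S \<union> N) = carrier G"
  proof
    show "generate G (S \<union> N) \<subseteq> carrier G" using generate_incl Sc Nc by simp
    show "carrier G \<subseteq> generate G (S \<union> N)" using gen mono_generate[of S "S \<union> N"] by auto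
  qed
  from Zmap_ind[OF N D fS Sc] show ?thesis
  proof
    assume "\<exists>T. finite T \<and> T \<subseteq> carrier G \<and> generate G (S \<union> N) \<subseteq> (\<Union>t\<in>T. N #> t)"
    then obtain T where fT: "finite T" and Tc: "T \<subseteq> carrier G" and cov: "carrier G \<subseteq> (\<Union>t\<in>T. N #> t)"
      using gc by auto
    have "rcosets N \<subseteq> (\<lambda>t. N #> t) ` T"
    proof
      fix C assume "C \<in> rcosets N"
      then obtain x where x: "x \<in> carrier G" and C: "C = N #> x" unfolding RCOSETS_def by blast
      obtain t where t: "t \<in> T" and xt: "x \<in> N #> t" using cov x by blast
      have "N #> t = N #> x" using repr_independence[OF xt _ N] t Tc by auto
      thus "C \<in> (\<lambda>t. N #> t) ` T" using C t by blast
    qed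
    hence "finite (rcosets N)" using fT finite_subset by blast
    thus ?thesis using inf by simp
  next
    assume "\<exists>\<psi>. addh (generate G (S \<union> N)) \<psi> \<and> (\<forall>n\<in>N. \<psi> n = 0) \<and> (\<exists>x\<in>generate G (S \<union> N). \<psi> x \<noteq> 0)"
    then obtain \<psi> x0 where a: "addh (carrier G) \<psi>" and N0: "\<forall>n\<in>N. \<psi> n = 0"
      and x0: "x0 \<in> carrier G" "\<psi> x0 \<noteq> 0" using gc by auto
    have CG: "subgroup (carrier G) G" by (rule subgroup_self)
    define P where "P = {n::nat. n > 0 \<and> (\<exists>x\<in>carrier G. \<psi> x = int n)}"
    have "\<exists>n. n \<in> P"
    proof (cases "\<psi> x0 > 0")
      case True
      hence "nat (\<psi> x0) \<in> P" unfolding P_def using x0 by auto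
      thus ?thesis by blast
    next
      case False
      hence neg: "\<psi> x0 < 0" using x0 by simp
      have "\<psi> (inv x0) = - \<psi> x0" using addh_inv[OF CG a x0(1)] .
      hence "nat (- \<psi> x0) \<in> P" unfolding P_def using x0 neg inv_closed[OF x0(1)] by (auto intro!: bexI[of _ "inv x0"])
      thus ?thesis by blast
    qed
    define d where "d = (LEAST n. n \<in> P)"
    have dP: "d \<in> P" unfolding d_def using \<open>\<exists>n. n \<in> P\<close> by (metis LeastI)
    then obtain t0 where t0: "t0 \<in> carrier G" "\<psi> t0 = int d" and d0: "d > 0" unfolding P_def by blast
    have dvd: "int d dvd \<psi> x" if x: "x \<in> carrier G" for x
    proof -
      define q where "q = \<psi> x div int d"
      define r where "r = \<psi> x mod int d"
      have r0: "0 \<le> r" and rd: "r < int d" using d0 unfolding r_def by auto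
      have xq: "x \<otimes> t0 [^] (- q) \<in> carrier G" using x t0 by simp
      have "\<psi> (x \<otimes> t0 [^] (- q)) = \<psi> x + \<psi> (t0 [^] (- q))" using a x t0 unfolding addh_def by simp
      also have "\<psi> (t0 [^] (- q)) = - q * int d" using addh_pow[OF CG a t0(1)] t0 by simp
      finally have "\<psi> (x \<otimes> t0 [^] (- q)) = r" unfolding r_def q_def by (simp add: minus_div_mult_eq_mod[symmetric] algebra_simps)
      have "r = 0"
      proof (rule ccontr)
        assume "r \<noteq> 0"
        hence "nat r \<in> P" unfolding P_def using r0 xq \<open>\<psi> (x \<otimes> t0 [^] (- q)) = r\<close> by auto
        hence "d \<le> nat r" unfolding d_def by (rule Least_le)
        thus False using rd r0 by simp
      qed
      thus ?thesis unfolding r_def by (simp add: dvd_eq_mod_eq_0)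
    qed
    define \<psi>2 where "\<psi>2 x = \<psi> x div int d" for x
    have "\<forall>x\<in>carrier G. \<forall>y\<in>carrier G. \<psi>2 (x \<otimes> y) = \<psi>2 x + \<psi>2 y"
      using a dvd unfolding addh_def \<psi>2_def by (simp add: div_plus_div_distrib_dvd_left)
    moreover have "\<forall>n\<in>N. \<psi>2 n = 0" using N0 unfolding \<psi>2_def by simp
    moreover have "\<psi>2 t0 = 1" unfolding \<psi>2_def using t0 d0 by simp
    ultimately show ?thesis using t0 by blast
  qed
qed

end



lemma (in group) cancel_simps [simp]:
  "x \<in> carrier G \<Longrightarrow> y \<in> carrier G \<Longrightarrow> inv x \<otimes> (x \<otimes> y) = y"
  "x \<in> carrier G \<Longrightarrow> y \<in> carrier G \<Longrightarrow> x \<otimes> (inv x \<otimes> y) = y"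
  by (simp_all add: m_assoc[symmetric])

definition (in group) cent :: "'a set \<Rightarrow> 'a set" where
  "cent S = {c \<in> carrier G. \<forall>y\<in>S. c \<otimes> y = y \<otimes> c}"

lemma (in group) cent_subgroup:
  assumes S: "S \<subseteq> carrier G" shows "subgroup (cent S) G"
proof (rule subgroupI)
  show "cent S \<subseteq> carrier G" unfolding cent_def by auto
  show "cent S \<noteq> {}" unfolding cent_def using S by (auto intro!: exI[of _ \<one>])
  fix a b assume a: "a \<in> cent S"
  show "inv a \<in> cent S"
  proof -
    have ac: "a \<in> carrier G" using a unfolding cent_def by auto
    have "\<forall>y\<in>S. inv a \<otimes> y = y \<otimes> inv a"
    proof
      fix y assume y: "y \<in> S" hence yc: "y \<in> carrier G" using S by auto
      have e: "a \<otimes> y = y \<otimes> a" using a y unfolding cent_def by auto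
      have "inv a \<otimes> y = inv a \<otimes> (y \<otimes> a) \<otimes> inv a" using ac yc by (simp add: m_assoc)
      also have "\<dots> = inv a \<otimes> (a \<otimes> y) \<otimes> inv a" using e by simp
      also have "\<dots> = y \<otimes> inv a" using ac yc by (simp add: m_assoc)
      finally show "inv a \<otimes> y = y \<otimes> inv a" .
    qed
    thus ?thesis unfolding cent_def using ac by simp
  qed
  assume b: "b \<in> cent S"
  show "a \<otimes> b \<in> cent S"
  proof -
    have ac: "a \<in> carrier G" using a unfolding cent_def by auto
    have bc: "b \<in> carrier G" using b unfolding cent_def by auto
    have "\<forall>y\<in>S. a \<otimes> b \<otimes> y = y \<otimes> (a \<otimes> b)"
    proof
      fix y assume y: "y \<in> S" hence yc: "y \<in> carrier G" using S by auto
      have "a \<otimes> b \<otimes> y = a \<otimes> (b \<otimes> y)" using ac bc yc by (simp add: m_assoc)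
      also have "\<dots> = a \<otimes> (y \<otimes> b)" using b y unfolding cent_def by auto
      also have "\<dots> = (a \<otimes> y) \<otimes> b" using ac bc yc by (simp add: m_assoc)
      also have "\<dots> = (y \<otimes> a) \<otimes> b" using a y unfolding cent_def by auto
      also have "\<dots> = y \<otimes> (a \<otimes> b)" using ac bc yc by (simp add: m_assoc)
      finally show "a \<otimes> b \<otimes> y = y \<otimes> (a \<otimes> b)" .
    qed
    thus ?thesis unfolding cent_def using ac bc by simp
  qed
qed

lemma (in group) subgroup_card_dvd:
  assumes I: "subgroup I G" and J: "subgroup J G" and IJ: "I \<subseteq> J"
  shows "card I dvd card J"
proof -
  interpret GJ: group "G\<lparr>carrier := J\<rparr>" using subgroup_imp_group[OF J] .
  have "card (rcosets\<^bsub>G\<lparr>carrier := J\<rparr>\<^esub> I) * card I = order (G\<lparr>carrier := J\<rparr>)"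
    using GJ.lagrange[OF subgroup_incl[OF I J IJ]] .
  thus ?thesis unfolding order_def by (metis dvd_triv_right partial_object.select_convs(1) partial_object.surjective partial_object.update_convs(1))
qed

locale zq = group G + F: group F for G (structure) and F :: "('f,'d) monoid_scheme" +
  fixes psi :: "'f \<Rightarrow> int" and t :: 'f
  assumes psi_add: "\<And>x y. x \<in> carrier F \<Longrightarrow> y \<in> carrier F \<Longrightarrow> psi (x \<otimes>\<^bsub>F\<^esub> y) = psi x + psi y"
    and t_in: "t \<in> carrier F" and psi_t: "psi t = 1"
begin

definition K where "K = {x \<in> carrier F. psi x = 0}"
abbreviation tp :: "int \<Rightarrow> 'f" where "tp j \<equiv> t [^]\<^bsub>F\<^esub> j"
definition cjF where "cjF x y = x \<otimes>\<^bsub>F\<^esub> y \<otimes>\<^bsub>F\<^esub> inv\<^bsub>F\<^esub> x"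
definition cj where "cj x y = x \<otimes> y \<otimes> inv x"

lemma psi_one: "psi \<one>\<^bsub>F\<^esub> = 0"
  using psi_add[of "\<one>\<^bsub>F\<^esub>" "\<one>\<^bsub>F\<^esub>"] by simp

lemma psi_inv: "x \<in> carrier F \<Longrightarrow> psi (inv\<^bsub>F\<^esub> x) = - psi x"
  using psi_add[of x "inv\<^bsub>F\<^esub> x"] psi_one by simp

lemma psi_nat_pow: "x \<in> carrier F \<Longrightarrow> psi (x [^]\<^bsub>F\<^esub> (n::nat)) = int n * psi x"
  proof (induction n)
  case 0 thus ?case by (simp add: psi_one)
next
  case (Suc n)
  have "psi (x [^]\<^bsub>F\<^esub> Suc n) = psi (x [^]\<^bsub>F\<^esub> n) + psi x"
    using Suc.prems by (simp add: psi_add)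
  thus ?case using Suc by (simp add: distrib_right)
qed

lemma psi_pow: "x \<in> carrier F \<Longrightarrow> psi (x [^]\<^bsub>F\<^esub> (j::int)) = j * psi x"
  proof (cases "j < 0")
  case True
  assume x: "x \<in> carrier F"
  have jj: "j = - int (nat (-j))" using True by simp
  have "x [^]\<^bsub>F\<^esub> j = inv\<^bsub>F\<^esub> (x [^]\<^bsub>F\<^esub> nat (-j))" by (subst jj) (rule F.int_pow_neg_int[OF x])
  thus ?thesis using True x psi_nat_pow[OF x, of "nat (-j)"] psi_inv[of "x [^]\<^bsub>F\<^esub> nat (-j)"] by simp
next
  case False
  assume x: "x \<in> carrier F"
  have jj: "j = int (nat j)" using False by simp
  have "x [^]\<^bsub>F\<^esub> j = x [^]\<^bsub>F\<^esub> nat j" by (subst jj) (rule int_pow_int)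
  thus ?thesis using False x psi_nat_pow[OF x, of "nat j"] by simp
qed

lemma psi_tp [simp]: "psi (tp j) = j"
  using psi_pow[OF t_in] psi_t by simp

lemma tp_in [simp]: "tp j \<in> carrier F"
  using t_in by simp

lemma K_sub: "K \<subseteq> carrier F" unfolding K_def by auto

lemma decomp_K: "f \<in> carrier F \<Longrightarrow> f \<otimes>\<^bsub>F\<^esub> tp (- psi f) \<in> K"
  unfolding K_def by (simp add: psi_add)

lemma decomp: "f \<in> carrier F \<Longrightarrow> f = (f \<otimes>\<^bsub>F\<^esub> tp (- psi f)) \<otimes>\<^bsub>F\<^esub> tp (psi f)"
proof -
  assume f: "f \<in> carrier F"
  have "tp (- psi f) \<otimes>\<^bsub>F\<^esub> tp (psi f) = \<one>\<^bsub>F\<^esub>"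
    using F.int_pow_mult[OF t_in, of "- psi f" "psi f"] by simp
  thus ?thesis using f by (simp add: F.m_assoc)
qed

lemma cjF_K: "k \<in> K \<Longrightarrow> x \<in> carrier F \<Longrightarrow> cjF x k \<in> K"
  unfolding K_def cjF_def by (simp add: psi_add psi_inv)

lemma cjF_in: "k \<in> carrier F \<Longrightarrow> x \<in> carrier F \<Longrightarrow> cjF x k \<in> carrier F"
  unfolding cjF_def by simp

lemma cjF_mult: "x \<in> carrier F \<Longrightarrow> y \<in> carrier F \<Longrightarrow> k \<in> carrier F \<Longrightarrow> cjF (x \<otimes>\<^bsub>F\<^esub> y) k = cjF x (cjF y k)"
  unfolding cjF_def by (simp add: F.m_assoc F.inv_mult_group)

lemma cj_mult: "x \<in> carrier G \<Longrightarrow> y \<in> carrier G \<Longrightarrow> k \<in> carrier G \<Longrightarrow> cj (x \<otimes> y) k = cj x (cj y k)"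
  unfolding cj_def by (simp add: m_assoc inv_mult_group)

lemma cj_in: "x \<in> carrier G \<Longrightarrow> k \<in> carrier G \<Longrightarrow> cj x k \<in> carrier G"
  unfolding cj_def by simp

lemma cj_comm: "c \<in> carrier G \<Longrightarrow> y \<in> carrier G \<Longrightarrow> c \<otimes> y = y \<otimes> c \<Longrightarrow> cj c y = y"
  unfolding cj_def by (simp add: m_assoc)

lemma hom_inv': "\<phi> \<in> hom F G \<Longrightarrow> x \<in> carrier F \<Longrightarrow> \<phi> (inv\<^bsub>F\<^esub> x) = inv (\<phi> x)"
  using group_hom.hom_inv[of F G \<phi> x] F.is_group is_group unfolding group_hom_def group_hom_axioms_def by blast

lemma hom_cj: "\<phi> \<in> hom F G \<Longrightarrow> x \<in> carrier F \<Longrightarrow> k \<in> carrier F \<Longrightarrow> \<phi> (cjF x k) = cj (\<phi> x) (\<phi> k)"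
  unfolding cjF_def cj_def
  by (simp add: hom_mult hom_in_carrier hom_inv')

lemma hom_tp: "\<phi> \<in> hom F G \<Longrightarrow> \<phi> (tp j) = \<phi> t [^] j"
  using hom_int_pow[of \<phi> F G t j] t_in F.is_group is_group by simp

lemma hom_determined:
  assumes "\<phi>1 \<in> hom F G" "\<phi>2 \<in> hom F G" "\<forall>k\<in>K. \<phi>1 k = \<phi>2 k" "\<phi>1 t = \<phi>2 t" "f \<in> carrier F"
  shows "\<phi>1 f = \<phi>2 f"
proof -
  have "\<phi>1 f = \<phi>1 (f \<otimes>\<^bsub>F\<^esub> tp (- psi f)) \<otimes> \<phi>1 (tp (psi f))"
    using decomp[OF assms(5)] hom_mult[OF assms(1)] assms(5) by (metis F.m_closed tp_in)
  moreover have "\<phi>2 f = \<phi>2 (f \<otimes>\<^bsub>F\<^esub> tp (- psi f)) \<otimes> \<phi>2 (tp (psi f))"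
    using decomp[OF assms(5)] hom_mult[OF assms(2)] assms(5) by (metis F.m_closed tp_in)
  ultimately show ?thesis using assms decomp_K[OF assms(5)] hom_tp[OF assms(1)] hom_tp[OF assms(2)] by simp
qed


lemma cj_one: "y \<in> carrier G \<Longrightarrow> cj \<one> y = y"
  unfolding cj_def by simp

lemma cjF_one: "y \<in> carrier F \<Longrightarrow> cjF \<one>\<^bsub>F\<^esub> y = y"
  unfolding cjF_def by simp

lemma comm_inv: "c \<in> carrier G \<Longrightarrow> y \<in> carrier G \<Longrightarrow> c \<otimes> y = y \<otimes> c \<Longrightarrow> inv c \<otimes> y = y \<otimes> inv c"
proof -
  assume c: "c \<in> carrier G" and y: "y \<in> carrier G" and e: "c \<otimes> y = y \<otimes> c"
  have "inv c \<otimes> y = inv c \<otimes> (y \<otimes> c) \<otimes> inv c" using c y by (simp add: m_assoc)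
  also have "\<dots> = inv c \<otimes> (c \<otimes> y) \<otimes> inv c" using e by simp
  also have "\<dots> = y \<otimes> inv c" using c y by (simp add: m_assoc)
  finally show ?thesis .
qed

lemma cj_eq_comm:
  assumes a: "a \<in> carrier G" and b: "b \<in> carrier G" and y: "y \<in> carrier G" and e: "cj a y = cj b y"
  shows "(inv b \<otimes> a) \<otimes> y = y \<otimes> (inv b \<otimes> a)"
proof -
  have "(inv b \<otimes> a) \<otimes> y = inv b \<otimes> (a \<otimes> y \<otimes> inv a) \<otimes> a" using a b y by (simp add: m_assoc)
  also have "\<dots> = inv b \<otimes> (b \<otimes> y \<otimes> inv b) \<otimes> a" using e unfolding cj_def by simp
  also have "\<dots> = y \<otimes> (inv b \<otimes> a)" using a b y by (simp add: m_assoc)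
  finally show ?thesis .
qed

lemma cj_mult_right: "u \<in> carrier G \<Longrightarrow> y \<in> carrier G \<Longrightarrow> cj u y \<otimes> u = u \<otimes> y"
  unfolding cj_def by (simp add: m_assoc)

definition Cen :: "('f \<Rightarrow> 'a) \<Rightarrow> 'a set" where
  "Cen \<phi>0 = {c \<in> carrier G. \<forall>k\<in>K. c \<otimes> \<phi>0 k = \<phi>0 k \<otimes> c}"

lemma conj_pow:
  assumes h: "\<phi>0 \<in> hom F G" and c: "c \<in> Cen \<phi>0"
  shows "\<forall>k\<in>K. cj ((\<phi>0 t \<otimes> c) [^] a) (\<phi>0 k) = \<phi>0 (cjF (tp a) k)"
proof (induction a rule: int_induct[where k=0])
  have cc: "c \<in> carrier G" using c unfolding Cen_def by auto
  have g0: "\<phi>0 t \<in> carrier G" using hom_in_carrier[OF h t_in] .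
  let ?x = "\<phi>0 t \<otimes> c"
  have xc: "?x \<in> carrier G" using cc g0 by simp
  have hk: "\<And>k. k \<in> K \<Longrightarrow> \<phi>0 k \<in> carrier G" using hom_in_carrier[OF h] K_sub by blast
  {
    case base
    show ?case
    proof
      fix k assume k: "k \<in> K" hence "k \<in> carrier F" using K_sub by blast
      thus "cj (?x [^] (0::int)) (\<phi>0 k) = \<phi>0 (cjF (tp 0) k)" by (simp add: cj_one cjF_one hk[OF k])
    qed
  next
    case (step1 i)
    show ?case
    proof
      fix k assume k: "k \<in> K"
      have kc: "k \<in> carrier F" using k K_sub by blast
      have tk: "cjF t k \<in> K" using cjF_K[OF k t_in] .
      have "cj ?x (\<phi>0 k) = cj (\<phi>0 t) (cj c (\<phi>0 k))" using cj_mult g0 cc hk[OF k] by simp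
      also have "\<dots> = cj (\<phi>0 t) (\<phi>0 k)" using cj_comm[OF cc hk[OF k]] c k unfolding Cen_def by simp
      also have "\<dots> = \<phi>0 (cjF t k)" using hom_cj[OF h t_in kc] by simp
      finally have e1: "cj ?x (\<phi>0 k) = \<phi>0 (cjF t k)" .
      have "?x [^] (i + 1) = ?x [^] i \<otimes> ?x" using int_pow_mult[OF xc, of i 1] xc by simp
      hence "cj (?x [^] (i + 1)) (\<phi>0 k) = cj (?x [^] i) (cj ?x (\<phi>0 k))" using cj_mult xc hk[OF k] by simp
      also have "\<dots> = \<phi>0 (cjF (tp i) (cjF t k))" using e1 step1.IH tk by simp
      also have "\<dots> = \<phi>0 (cjF (tp (i+1)) k)"
        using cjF_mult[of "tp i" t k] kc t_in F.int_pow_mult[OF t_in, of i 1] by simp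
      finally show "cj (?x [^] (i + 1)) (\<phi>0 k) = \<phi>0 (cjF (tp (i + 1)) k)" .
    qed
  next
    case (step2 i)
    show ?case
    proof
      fix k assume k: "k \<in> K"
      have kc: "k \<in> carrier F" using k K_sub by blast
      have itF: "inv\<^bsub>F\<^esub> t \<in> carrier F" using t_in by simp
      have tk: "cjF (inv\<^bsub>F\<^esub> t) k \<in> K" using cjF_K[OF k itF] .
      have ix: "inv ?x = inv c \<otimes> inv (\<phi>0 t)" using cc g0 by (simp add: inv_mult_group)
      have "cj (inv ?x) (\<phi>0 k) = cj (inv c) (cj (inv (\<phi>0 t)) (\<phi>0 k))" using ix cj_mult g0 cc hk[OF k] by simp
      also have "cj (inv (\<phi>0 t)) (\<phi>0 k) = \<phi>0 (cjF (inv\<^bsub>F\<^esub> t) k)"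
        using hom_cj[OF h itF kc] hom_inv'[OF h t_in] by simp
      also have "cj (inv c) (\<phi>0 (cjF (inv\<^bsub>F\<^esub> t) k)) = \<phi>0 (cjF (inv\<^bsub>F\<^esub> t) k)"
      proof (rule cj_comm)
        show "inv c \<in> carrier G" using cc by simp
        show "\<phi>0 (cjF (inv\<^bsub>F\<^esub> t) k) \<in> carrier G" using hk[OF tk] .
        show "inv c \<otimes> \<phi>0 (cjF (inv\<^bsub>F\<^esub> t) k) = \<phi>0 (cjF (inv\<^bsub>F\<^esub> t) k) \<otimes> inv c"
          using comm_inv[OF cc hk[OF tk]] c tk unfolding Cen_def by simp
      qed
      finally have e1: "cj (inv ?x) (\<phi>0 k) = \<phi>0 (cjF (inv\<^bsub>F\<^esub> t) k)" .
      have "?x [^] (i - 1) = ?x [^] i \<otimes> inv ?x"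
        using int_pow_mult[OF xc, of i "-1"] int_pow_neg[OF xc, of 1] xc by simp
      hence "cj (?x [^] (i - 1)) (\<phi>0 k) = cj (?x [^] i) (cj (inv ?x) (\<phi>0 k))" using cj_mult xc hk[OF k] by simp
      also have "\<dots> = \<phi>0 (cjF (tp i) (cjF (inv\<^bsub>F\<^esub> t) k))" using e1 step2.IH tk by simp
      also have "\<dots> = \<phi>0 (cjF (tp (i - 1)) k)"
        using cjF_mult[of "tp i" "inv\<^bsub>F\<^esub> t" k] kc itF F.int_pow_mult[OF t_in, of i "-1"] F.int_pow_neg[OF t_in, of 1] F.int_pow_1[OF t_in] by simp
      finally show "cj (?x [^] (i - 1)) (\<phi>0 k) = \<phi>0 (cjF (tp (i - 1)) k)" .
    qed
  }
qed


definition mk :: "('f \<Rightarrow> 'a) \<Rightarrow> 'a \<Rightarrow> 'f \<Rightarrow> 'a" where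
  "mk \<phi>0 c = (\<lambda>f\<in>carrier F. \<phi>0 (f \<otimes>\<^bsub>F\<^esub> tp (- psi f)) \<otimes> (\<phi>0 t \<otimes> c) [^] psi f)"

lemma F_key:
  assumes x: "x \<in> carrier F" and y: "y \<in> carrier F"
  shows "(x \<otimes>\<^bsub>F\<^esub> y) \<otimes>\<^bsub>F\<^esub> tp (- (a + b)) =
         (x \<otimes>\<^bsub>F\<^esub> tp (- a)) \<otimes>\<^bsub>F\<^esub> cjF (tp a) (y \<otimes>\<^bsub>F\<^esub> tp (- b))"
proof -
  have e: "tp (- (a + b)) = inv\<^bsub>F\<^esub> (tp b) \<otimes>\<^bsub>F\<^esub> inv\<^bsub>F\<^esub> (tp a)"
    using F.int_pow_neg[OF t_in, of "a+b"] F.int_pow_mult[OF t_in, of a b] F.inv_mult_group[OF tp_in tp_in] by simp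
  show ?thesis unfolding cjF_def e using x y t_in
    by (simp add: F.int_pow_neg F.m_assoc F.inv_mult_group)
qed

lemma mk_hom:
  assumes h: "\<phi>0 \<in> hom F G" and c: "c \<in> Cen \<phi>0"
  shows "mk \<phi>0 c \<in> hom F G"
proof (rule homI)
  have cc: "c \<in> carrier G" using c unfolding Cen_def by auto
  have g0: "\<phi>0 t \<in> carrier G" using hom_in_carrier[OF h t_in] .
  let ?x = "\<phi>0 t \<otimes> c"
  have xc: "?x \<in> carrier G" using cc g0 by simp
  have hc: "\<And>f. f \<in> carrier F \<Longrightarrow> \<phi>0 f \<in> carrier G" using hom_in_carrier[OF h] by blast
  show "\<And>x. x \<in> carrier F \<Longrightarrow> mk \<phi>0 c x \<in> carrier G"
    unfolding mk_def using hc xc by simp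
  fix x y assume x: "x \<in> carrier F" and y: "y \<in> carrier F"
  define a where "a = psi x"
  define b where "b = psi y"
  define k1 where "k1 = x \<otimes>\<^bsub>F\<^esub> tp (- a)"
  define k2 where "k2 = y \<otimes>\<^bsub>F\<^esub> tp (- b)"
  have k1: "k1 \<in> K" unfolding k1_def a_def using decomp_K[OF x] .
  have k2: "k2 \<in> K" unfolding k2_def b_def using decomp_K[OF y] .
  have k1c: "k1 \<in> carrier F" and k2c: "k2 \<in> carrier F" using k1 k2 K_sub by auto
  have pxy: "psi (x \<otimes>\<^bsub>F\<^esub> y) = a + b" using psi_add[OF x y] a_def b_def by simp
  have "mk \<phi>0 c (x \<otimes>\<^bsub>F\<^esub> y) = \<phi>0 ((x \<otimes>\<^bsub>F\<^esub> y) \<otimes>\<^bsub>F\<^esub> tp (- (a + b))) \<otimes> ?x [^] (a + b)"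
    unfolding mk_def using x y pxy by simp
  also have "\<dots> = \<phi>0 (k1 \<otimes>\<^bsub>F\<^esub> cjF (tp a) k2) \<otimes> ?x [^] (a + b)"
    using F_key[OF x y, of a b] k1_def k2_def by simp
  also have "\<dots> = \<phi>0 k1 \<otimes> cj (?x [^] a) (\<phi>0 k2) \<otimes> (?x [^] a \<otimes> ?x [^] b)"
    using hom_mult[OF h k1c cjF_in[OF k2c tp_in]] conj_pow[OF h c] k2 int_pow_mult[OF xc] by simp
  also have "\<dots> = \<phi>0 k1 \<otimes> (cj (?x [^] a) (\<phi>0 k2) \<otimes> ?x [^] a) \<otimes> ?x [^] b"
    using hc k1c k2c xc cj_in by (simp add: m_assoc)
  also have "\<dots> = \<phi>0 k1 \<otimes> (?x [^] a \<otimes> \<phi>0 k2) \<otimes> ?x [^] b"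
    using cj_mult_right hc k2c xc by simp
  also have "\<dots> = (\<phi>0 k1 \<otimes> ?x [^] a) \<otimes> (\<phi>0 k2 \<otimes> ?x [^] b)"
    using hc k1c k2c xc by (simp add: m_assoc)
  also have "\<dots> = mk \<phi>0 c x \<otimes> mk \<phi>0 c y"
    unfolding mk_def using x y k1_def k2_def a_def b_def by simp
  finally show "mk \<phi>0 c (x \<otimes>\<^bsub>F\<^esub> y) = mk \<phi>0 c x \<otimes> mk \<phi>0 c y" .
qed

lemma mk_K: "\<phi>0 \<in> hom F G \<Longrightarrow> k \<in> K \<Longrightarrow> mk \<phi>0 c k = \<phi>0 k"
  unfolding mk_def K_def using hom_in_carrier[of \<phi>0 F G k] by simp

lemma mk_t: "\<phi>0 \<in> hom F G \<Longrightarrow> c \<in> carrier G \<Longrightarrow> mk \<phi>0 c t = \<phi>0 t \<otimes> c"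
proof -
  assume h: "\<phi>0 \<in> hom F G" and c: "c \<in> carrier G"
  have "t \<otimes>\<^bsub>F\<^esub> tp (- 1) = \<one>\<^bsub>F\<^esub>" using t_in F.int_pow_neg[OF t_in, of 1] by simp
  moreover have "\<phi>0 \<one>\<^bsub>F\<^esub> = \<one>" using h F.is_group is_group
    by (metis F.one_closed hom_one group_hom_axioms.intro group_hom_def)
  ultimately show ?thesis unfolding mk_def using t_in psi_t c hom_in_carrier[OF h t_in] by simp
qed

lemma fiber_card:
  assumes h: "\<phi>0 \<in> hom F G"
  shows "card {\<phi> \<in> hom F G. \<phi> \<in> extensional (carrier F) \<and> restrict \<phi> K = restrict \<phi>0 K} = card (Cen \<phi>0)"
proof -
  let ?X = "{\<phi> \<in> hom F G. \<phi> \<in> extensional (carrier F) \<and> restrict \<phi> K = restrict \<phi>0 K}"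
  have g0: "\<phi>0 t \<in> carrier G" using hom_in_carrier[OF h t_in] .
  have hc: "\<And>f. f \<in> carrier F \<Longrightarrow> \<phi>0 f \<in> carrier G" using hom_in_carrier[OF h] by blast
  have onK: "\<And>\<phi> k. \<phi> \<in> ?X \<Longrightarrow> k \<in> K \<Longrightarrow> \<phi> k = \<phi>0 k"
    by (metis (mono_tags, lifting) mem_Collect_eq restrict_apply')
  have cen: "(\<lambda>\<phi>. inv (\<phi>0 t) \<otimes> \<phi> t) ` ?X \<subseteq> Cen \<phi>0"
  proof
    fix y assume "y \<in> (\<lambda>\<phi>. inv (\<phi>0 t) \<otimes> \<phi> t) ` ?X"
    then obtain \<phi> where p: "\<phi> \<in> ?X" and y: "y = inv (\<phi>0 t) \<otimes> \<phi> t" by blast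
    have ph: "\<phi> \<in> hom F G" using p by simp
    have pt: "\<phi> t \<in> carrier G" using hom_in_carrier[OF ph t_in] .
    have "\<forall>k\<in>K. y \<otimes> \<phi>0 k = \<phi>0 k \<otimes> y"
    proof
      fix k assume k: "k \<in> K"
      have kc: "k \<in> carrier F" using k K_sub by blast
      have tk: "cjF t k \<in> K" using cjF_K[OF k t_in] .
      have "cj (\<phi> t) (\<phi>0 k) = \<phi> (cjF t k)" using hom_cj[OF ph t_in kc] onK[OF p k] by simp
      also have "\<dots> = \<phi>0 (cjF t k)" using onK[OF p tk] .
      also have "\<dots> = cj (\<phi>0 t) (\<phi>0 k)" using hom_cj[OF h t_in kc] .
      finally show "y \<otimes> \<phi>0 k = \<phi>0 k \<otimes> y" using cj_eq_comm[OF pt g0 hc[OF kc]] y by simp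
    qed
    thus "y \<in> Cen \<phi>0" unfolding Cen_def using y g0 pt by simp
  qed
  have "bij_betw (\<lambda>\<phi>. inv (\<phi>0 t) \<otimes> \<phi> t) ?X (Cen \<phi>0)"
  proof (rule bij_betw_byWitness[where f'="mk \<phi>0"])
    show "\<forall>\<phi>\<in>?X. mk \<phi>0 (inv (\<phi>0 t) \<otimes> \<phi> t) = \<phi>"
    proof
      fix \<phi> assume p: "\<phi> \<in> ?X"
      have ph: "\<phi> \<in> hom F G" using p by simp
      have pt: "\<phi> t \<in> carrier G" using hom_in_carrier[OF ph t_in] .
      have cc: "inv (\<phi>0 t) \<otimes> \<phi> t \<in> carrier G" using g0 pt by simp
      show "mk \<phi>0 (inv (\<phi>0 t) \<otimes> \<phi> t) = \<phi>"
      proof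
        fix f show "mk \<phi>0 (inv (\<phi>0 t) \<otimes> \<phi> t) f = \<phi> f"
        proof (cases "f \<in> carrier F")
          case True
          show ?thesis
          proof (rule hom_determined[OF _ ph _ _ True])
            show "mk \<phi>0 (inv (\<phi>0 t) \<otimes> \<phi> t) \<in> hom F G" using mk_hom[OF h] cen p by blast
            show "\<forall>k\<in>K. mk \<phi>0 (inv (\<phi>0 t) \<otimes> \<phi> t) k = \<phi> k" using mk_K[OF h] onK[OF p] by simp
            show "mk \<phi>0 (inv (\<phi>0 t) \<otimes> \<phi> t) t = \<phi> t" using mk_t[OF h cc] g0 pt by simp
          qed
        next
          case False
          thus ?thesis using p unfolding mk_def extensional_def by simp
        qed
      qed
    qed
    show "\<forall>c\<in>Cen \<phi>0. inv (\<phi>0 t) \<otimes> mk \<phi>0 c t = c"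
      using mk_t[OF h] g0 unfolding Cen_def by simp
    show "(\<lambda>\<phi>. inv (\<phi>0 t) \<otimes> \<phi> t) ` ?X \<subseteq> Cen \<phi>0" by (rule cen)
    show "mk \<phi>0 ` Cen \<phi>0 \<subseteq> ?X"
    proof
      fix y assume "y \<in> mk \<phi>0 ` Cen \<phi>0"
      then obtain c where c: "c \<in> Cen \<phi>0" and y: "y = mk \<phi>0 c" by blast
      have "restrict y K = restrict \<phi>0 K"
        using mk_K[OF h] y by (auto simp: restrict_def)
      moreover have "y \<in> extensional (carrier F)" unfolding y mk_def by simp
      ultimately show "y \<in> ?X" using mk_hom[OF h c] y by simp
    qed
  qed
  thus ?thesis by (rule bij_betw_same_card)
qed


lemma cj_mult_distrib: "n \<in> carrier G \<Longrightarrow> a \<in> carrier G \<Longrightarrow> b \<in> carrier G \<Longrightarrow> cj n (a \<otimes> b) = cj n a \<otimes> cj n b"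
  unfolding cj_def by (simp add: m_assoc)

lemma cj_inv_cancel: "n \<in> carrier G \<Longrightarrow> a \<in> carrier G \<Longrightarrow> cj (inv n) (cj n a) = a"
  unfolding cj_def by (simp add: m_assoc)

lemma cj_inv_cancel2: "n \<in> carrier G \<Longrightarrow> a \<in> carrier G \<Longrightarrow> cj n (cj (inv n) a) = a"
  unfolding cj_def by (simp add: m_assoc)

lemma cj_hom: "\<phi> \<in> hom F G \<Longrightarrow> n \<in> carrier G \<Longrightarrow> (\<lambda>f\<in>carrier F. cj n (\<phi> f)) \<in> hom F G"
  by (rule homI) (simp_all add: cj_in hom_in_carrier hom_mult cj_mult_distrib)

lemma cent_conj:
  assumes n: "n \<in> carrier G" and S: "S \<subseteq> carrier G"
  shows "card (cent (cj n ` S)) = card (cent S)"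
proof -
  have "bij_betw (cj (inv n)) (cent (cj n ` S)) (cent S)"
  proof (rule bij_betw_byWitness[where f'="cj n"])
    show "\<forall>a\<in>cent (cj n ` S). cj n (cj (inv n) a) = a" using cj_inv_cancel2 n unfolding cent_def by auto
    show "\<forall>a\<in>cent S. cj (inv n) (cj n a) = a" using cj_inv_cancel n unfolding cent_def by auto
    show "cj (inv n) ` cent (cj n ` S) \<subseteq> cent S"
    proof
      fix x assume "x \<in> cj (inv n) ` cent (cj n ` S)"
      then obtain c where c: "c \<in> cent (cj n ` S)" and x: "x = cj (inv n) c" by blast
      have cc: "c \<in> carrier G" using c unfolding cent_def by auto
      have "\<forall>y\<in>S. x \<otimes> y = y \<otimes> x"
      proof
        fix y assume y: "y \<in> S" hence yc: "y \<in> carrier G" using S by auto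
        have e: "c \<otimes> cj n y = cj n y \<otimes> c" using c y unfolding cent_def by auto
        have "x \<otimes> y = cj (inv n) (c \<otimes> cj n y)"
          using x cj_mult_distrib[of "inv n" c "cj n y"] cj_inv_cancel[OF n yc] n cc yc cj_in by simp
        also have "\<dots> = cj (inv n) (cj n y \<otimes> c)" using e by simp
        also have "\<dots> = y \<otimes> x"
          using x cj_mult_distrib[of "inv n" "cj n y" c] cj_inv_cancel[OF n yc] n cc yc cj_in by simp
        finally show "x \<otimes> y = y \<otimes> x" .
      qed
      thus "x \<in> cent S" unfolding cent_def using x cc n cj_in by simp
    qed
    show "cj n ` cent S \<subseteq> cent (cj n ` S)"
    proof
      fix x assume "x \<in> cj n ` cent S"
      then obtain c where c: "c \<in> cent S" and x: "x = cj n c" by blast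
      have cc: "c \<in> carrier G" using c unfolding cent_def by auto
      have "\<forall>y\<in>cj n ` S. x \<otimes> y = y \<otimes> x"
      proof
        fix y assume "y \<in> cj n ` S"
        then obtain z where z: "z \<in> S" and y: "y = cj n z" by blast
        have zc: "z \<in> carrier G" using z S by auto
        have e: "c \<otimes> z = z \<otimes> c" using c z unfolding cent_def by auto
        have "x \<otimes> y = cj n (c \<otimes> z)" using x y cj_mult_distrib n cc zc by simp
        also have "\<dots> = cj n (z \<otimes> c)" using e by simp
        also have "\<dots> = y \<otimes> x" using x y cj_mult_distrib n cc zc by simp
        finally show "x \<otimes> y = y \<otimes> x" .
      qed
      thus "x \<in> cent (cj n ` S)" unfolding cent_def using x cc n cj_in by simp
    qed
  qed
  thus ?thesis by (simp add: bij_betw_same_card)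
qed

lemma count_dvd:
  assumes HG: "subgroup H G" and fG: "finite (carrier G)"
    and invP: "\<And>\<phi> n. \<phi> \<in> hom F G \<Longrightarrow> P (restrict \<phi> K) \<Longrightarrow> n \<in> H \<Longrightarrow> P (restrict (\<lambda>f. cj n (\<phi> f)) K)"
  shows "card H dvd card {\<phi> \<in> hom F G. \<phi> \<in> extensional (carrier F) \<and> P (restrict \<phi> K)}"
proof (cases "finite {\<phi> \<in> hom F G. \<phi> \<in> extensional (carrier F) \<and> P (restrict \<phi> K)}")
  case False thus ?thesis by simp
next
  case True
  let ?X = "{\<phi> \<in> hom F G. \<phi> \<in> extensional (carrier F) \<and> P (restrict \<phi> K)}"
  let ?R = "(\<lambda>\<phi>. restrict \<phi> K) ` ?X"
  let ?w = "\<lambda>\<rho>. card (cent (\<rho> ` K))"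
  let ?act = "\<lambda>n \<rho>. restrict (\<lambda>k. cj n (\<rho> k)) K"
  have Hc: "H \<subseteq> carrier G" using subgroup.subset[OF HG] .
  have fH: "finite H" using finite_subset[OF Hc fG] .
  have fR: "finite ?R" using True by simp
  have eX: "?X = (\<Union>\<rho>\<in>?R. {\<phi>\<in>?X. restrict \<phi> K = \<rho>})" by blast
  have "card (\<Union>\<rho>\<in>?R. {\<phi>\<in>?X. restrict \<phi> K = \<rho>}) = (\<Sum>\<rho>\<in>?R. card {\<phi>\<in>?X. restrict \<phi> K = \<rho>})"
  proof (rule card_UN_disjoint[OF fR])
    show "\<forall>i\<in>?R. finite {\<phi>\<in>?X. restrict \<phi> K = i}" using True by (intro ballI finite_subset[OF _ True]) blast
    show "\<forall>i\<in>?R. \<forall>j\<in>?R. i \<noteq> j \<longrightarrow> {\<phi>\<in>?X. restrict \<phi> K = i} \<inter> {\<phi>\<in>?X. restrict \<phi> K = j} = {}" by blast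
  qed
  hence cX: "card ?X = (\<Sum>\<rho>\<in>?R. card {\<phi>\<in>?X. restrict \<phi> K = \<rho>})" using eX by simp
  have fib: "card {\<phi>\<in>?X. restrict \<phi> K = \<rho>} = ?w \<rho>" if r: "\<rho> \<in> ?R" for \<rho>
  proof -
    obtain \<phi>0 where p0: "\<phi>0 \<in> ?X" and r0: "\<rho> = restrict \<phi>0 K" using r by blast
    have h0: "\<phi>0 \<in> hom F G" using p0 by simp
    have "{\<phi>\<in>?X. restrict \<phi> K = \<rho>} = {\<phi> \<in> hom F G. \<phi> \<in> extensional (carrier F) \<and> restrict \<phi> K = restrict \<phi>0 K}"
      using p0 r0 by auto
    moreover have "cent (\<rho> ` K) = Cen \<phi>0" unfolding cent_def Cen_def r0 by auto
    ultimately show ?thesis using fiber_card[OF h0] by simp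
  qed
  have "card ?X = (\<Sum>\<rho>\<in>?R. ?w \<rho>)" using cX fib by simp
  moreover have "card H dvd (\<Sum>\<rho>\<in>?R. ?w \<rho>)"
  proof (rule orbit_sum_dvd[OF HG fH fR, of ?act ?w])
    fix n \<rho> assume n: "n \<in> H" and r: "\<rho> \<in> ?R"
    have nc: "n \<in> carrier G" using n Hc by auto
    obtain \<phi> where p: "\<phi> \<in> ?X" and r0: "\<rho> = restrict \<phi> K" using r by blast
    have h: "\<phi> \<in> hom F G" using p by simp
    define \<phi>' where "\<phi>' = (\<lambda>f\<in>carrier F. cj n (\<phi> f))"
    have e1: "restrict \<phi>' K = ?act n \<rho>" unfolding \<phi>'_def r0 using K_sub by (auto simp: restrict_def fun_eq_iff)
    have e2: "restrict \<phi>' K = restrict (\<lambda>f. cj n (\<phi> f)) K" unfolding \<phi>'_def using K_sub by (auto simp: restrict_def fun_eq_iff)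
    have "\<phi>' \<in> ?X" using cj_hom[OF h nc] invP[OF h _ n] p e2 unfolding \<phi>'_def by simp
    thus "?act n \<rho> \<in> ?R" using e1 by (metis (no_types, lifting) image_eqI)
  next
    fix \<rho> assume r: "\<rho> \<in> ?R"
    obtain \<phi> where p: "\<phi> \<in> ?X" and r0: "\<rho> = restrict \<phi> K" using r by blast
    have h: "\<phi> \<in> hom F G" using p by simp
    show "?act \<one> \<rho> = \<rho>" unfolding r0 using K_sub hom_in_carrier[OF h] cj_one
      by (auto simp: restrict_def fun_eq_iff)
  next
    fix n m \<rho> assume n: "n \<in> H" and m: "m \<in> H" and r: "\<rho> \<in> ?R"
    have nc: "n \<in> carrier G" and mc: "m \<in> carrier G" using n m Hc by auto
    obtain \<phi> where p: "\<phi> \<in> ?X" and r0: "\<rho> = restrict \<phi> K" using r by blast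
    have h: "\<phi> \<in> hom F G" using p by simp
    show "?act (n \<otimes> m) \<rho> = ?act n (?act m \<rho>)" unfolding r0 using K_sub hom_in_carrier[OF h] cj_mult nc mc
      by (auto simp: restrict_def fun_eq_iff)
  next
    fix n \<rho> assume n: "n \<in> H" and r: "\<rho> \<in> ?R"
    have nc: "n \<in> carrier G" using n Hc by auto
    obtain \<phi> where p: "\<phi> \<in> ?X" and r0: "\<rho> = restrict \<phi> K" using r by blast
    have h: "\<phi> \<in> hom F G" using p by simp
    have S: "\<rho> ` K \<subseteq> carrier G" unfolding r0 using K_sub hom_in_carrier[OF h] by auto
    have "?act n \<rho> ` K = cj n ` (\<rho> ` K)" by auto
    thus "?w (?act n \<rho>) = ?w \<rho>" using cent_conj[OF nc S] by simp
  next
    fix \<rho> assume r: "\<rho> \<in> ?R"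
    obtain \<phi> where p: "\<phi> \<in> ?X" and r0: "\<rho> = restrict \<phi> K" using r by blast
    have h: "\<phi> \<in> hom F G" using p by simp
    have S: "\<rho> ` K \<subseteq> carrier G" unfolding r0 using K_sub hom_in_carrier[OF h] by auto
    have "{n\<in>H. ?act n \<rho> = \<rho>} = H \<inter> cent (\<rho> ` K)"
    proof (intro equalityI subsetI)
      fix n assume "n \<in> {n\<in>H. ?act n \<rho> = \<rho>}"
      hence n: "n \<in> H" and e: "?act n \<rho> = \<rho>" by auto
      have nc: "n \<in> carrier G" using n Hc by auto
      have "\<forall>y\<in>\<rho> ` K. n \<otimes> y = y \<otimes> n"
      proof
        fix y assume "y \<in> \<rho> ` K"
        then obtain k where k: "k \<in> K" and y: "y = \<rho> k" by blast
        have yc: "y \<in> carrier G" using S k y by auto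
        have "cj n y = y" using e k y by (metis restrict_apply')
        hence "n \<otimes> y \<otimes> inv n \<otimes> n = y \<otimes> n" unfolding cj_def by simp
        thus "n \<otimes> y = y \<otimes> n" using nc yc by (simp add: m_assoc)
      qed
      thus "n \<in> H \<inter> cent (\<rho> ` K)" unfolding cent_def using n nc by simp
    next
      fix n assume n: "n \<in> H \<inter> cent (\<rho> ` K)"
      have nc: "n \<in> carrier G" using n Hc by auto
      have "?act n \<rho> = \<rho>"
      proof
        fix k show "?act n \<rho> k = \<rho> k"
        proof (cases "k \<in> K")
          case True
          have yc: "\<rho> k \<in> carrier G" using S True by auto
          have "n \<otimes> \<rho> k = \<rho> k \<otimes> n" using n True unfolding cent_def by auto
          thus ?thesis using True cj_comm[OF nc yc] by simp
        next
          case False thus ?thesis unfolding r0 by simp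
        qed
      qed
      thus "n \<in> {n\<in>H. ?act n \<rho> = \<rho>}" using n by simp
    qed
    moreover have "card (H \<inter> cent (\<rho> ` K)) dvd card (cent (\<rho> ` K))"
      using subgroup_card_dvd[OF subgroups_Inter_pair[OF HG cent_subgroup[OF S]] cent_subgroup[OF S]] by blast
    ultimately show "card {n\<in>H. ?act n \<rho> = \<rho>} dvd ?w \<rho>" by simp
  qed
  ultimately show ?thesis by simp
qed

end


theorem mainTheorem7:
  fixes G :: "('g, 'c) monoid_scheme" and F :: "('f, 'd) monoid_scheme"
  assumes "group G" and "finite (carrier G)"
    and "subgroup A G"
    and "finitely_generated_group F"
    and "subgroup W F"
    and "infinite (rcosets\<^bsub>F\<^esub> (W <#>\<^bsub>F\<^esub> derived F (carrier F)))"
  shows "card (normalizer G A) dvd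
           card {\<phi> \<in> hom F G. \<phi> \<in> extensional (carrier F) \<and> inj_on \<phi> W \<and> \<phi> ` W \<subseteq> A} \<and>
         card (normalizer G A) dvd
           card {\<phi> \<in> hom F G. \<phi> \<in> extensional (carrier F) \<and> inj_on \<phi> W \<and> \<phi> ` W = A}"
proof -
  interpret G: group G by fact
  obtain S where fgF: "group F" and fS: "finite S" and Sc: "S \<subseteq> carrier F" and gen: "generate F S = carrier F"
    using assms(4) unfolding finitely_generated_group_def by blast
  interpret F: group F by (rule fgF)
  let ?D = "derived F (carrier F)"
  let ?N = "W <#>\<^bsub>F\<^esub> ?D"
  have Dn: "?D \<lhd> F" by (rule F.derived_self_is_normal)
  have Nsub: "subgroup ?N F"
    using F.commut_normal[OF assms(5) Dn] F.mult_norm_subgroup[OF Dn assms(5)] by simp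
  have Dsub: "subgroup ?D F" using Dn normal_imp_subgroup by blast
  have DN: "?D \<subseteq> ?N"
  proof
    fix d assume d: "d \<in> ?D"
    have "d = \<one>\<^bsub>F\<^esub> \<otimes>\<^bsub>F\<^esub> d" using d subgroup.subset[OF Dsub] by auto
    thus "d \<in> ?N" unfolding set_mult_def using subgroup.one_closed[OF assms(5)] d by blast
  qed
  have WN: "W \<subseteq> ?N"
  proof
    fix w assume w: "w \<in> W"
    have "w = w \<otimes>\<^bsub>F\<^esub> \<one>\<^bsub>F\<^esub>" using w subgroup.subset[OF assms(5)] by auto
    thus "w \<in> ?N" unfolding set_mult_def using subgroup.one_closed[OF Dsub] w by blast
  qed
  obtain \<psi> :: "'f \<Rightarrow> int" and t where padd: "\<forall>x\<in>carrier F. \<forall>y\<in>carrier F. \<psi> (x \<otimes>\<^bsub>F\<^esub> y) = \<psi> x + \<psi> y"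
    and N0: "\<forall>n\<in>?N. \<psi> n = 0" and t: "t \<in> carrier F" and pt: "\<psi> t = 1"
    using F.exists_psi[OF fS Sc gen Nsub DN assms(6)] by blast
  interpret Z: zq G F \<psi> t
    by (unfold_locales) (use padd t pt in auto)
  have WK: "W \<subseteq> Z.K" unfolding Z.K_def using WN N0 subgroup.subset[OF assms(5)] by auto
  have Ac: "A \<subseteq> carrier G" using subgroup.subset[OF assms(3)] .
  have HG: "subgroup (normalizer G A) G" using G.normalizer_imp_subgroup[OF Ac] .
  have nA: "Z.cj n ` A = A" if n: "n \<in> normalizer G A" for n
  proof -
    have nc: "n \<in> carrier G" and e: "n <#\<^bsub>G\<^esub> A #>\<^bsub>G\<^esub> inv\<^bsub>G\<^esub> n = A"
      using n Ac unfolding normalizer_def stabilizer_def by auto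
    have "Z.cj n ` A = n <#\<^bsub>G\<^esub> A #>\<^bsub>G\<^esub> inv\<^bsub>G\<^esub> n"
      unfolding Z.cj_def l_coset_def r_coset_def by auto
    thus ?thesis using e by simp
  qed
  have Hc: "normalizer G A \<subseteq> carrier G" using subgroup.subset[OF HG] .
  have resW: "restrict \<rho> Z.K ` W = \<rho> ` W" "inj_on (restrict \<rho> Z.K) W = inj_on \<rho> W" for \<rho> :: "'f \<Rightarrow> 'g"
    using WK by (auto intro!: inj_on_cong)
  have cjW: "(\<lambda>f. Z.cj n (\<phi> f)) ` W = Z.cj n ` (\<phi> ` W)" for n \<phi> by auto
  have cjinj: "inj_on (\<lambda>f. Z.cj n (\<phi> f)) W" if "n \<in> carrier G" "\<phi> \<in> hom F G" "inj_on \<phi> W" for n \<phi>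
  proof (rule inj_onI)
    fix x y assume x: "x \<in> W" and y: "y \<in> W" and e: "Z.cj n (\<phi> x) = Z.cj n (\<phi> y)"
    have xc: "\<phi> x \<in> carrier G" and yc: "\<phi> y \<in> carrier G"
      using x y subgroup.subset[OF assms(5)] hom_in_carrier[OF that(2)] by auto
    have "\<phi> x = \<phi> y" using Z.cj_inv_cancel[OF that(1) xc] Z.cj_inv_cancel[OF that(1) yc] e by metis
    thus "x = y" using that(3) x y inj_onD by metis
  qed
  have a: "card (normalizer G A) dvd card {\<phi> \<in> hom F G. \<phi> \<in> extensional (carrier F) \<and> (\<lambda>\<rho>. inj_on \<rho> W \<and> \<rho> ` W \<subseteq> A) (restrict \<phi> Z.K)}"
  proof (rule Z.count_dvd[OF HG assms(2)])
    fix \<phi> n assume h: "\<phi> \<in> hom F G" and P: "inj_on (restrict \<phi> Z.K) W \<and> restrict \<phi> Z.K ` W \<subseteq> A"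
      and n: "n \<in> normalizer G A"
    have nc: "n \<in> carrier G" using n Hc by auto
    have "inj_on (\<lambda>f. Z.cj n (\<phi> f)) W" using cjinj[OF nc h] P resW by simp
    moreover have "(\<lambda>f. Z.cj n (\<phi> f)) ` W \<subseteq> A" using cjW P resW nA[OF n] by (metis image_mono)
    ultimately show "inj_on (restrict (\<lambda>f. Z.cj n (\<phi> f)) Z.K) W \<and> restrict (\<lambda>f. Z.cj n (\<phi> f)) Z.K ` W \<subseteq> A"
      using resW by simp
  qed
  have b: "card (normalizer G A) dvd card {\<phi> \<in> hom F G. \<phi> \<in> extensional (carrier F) \<and> (\<lambda>\<rho>. inj_on \<rho> W \<and> \<rho> ` W = A) (restrict \<phi> Z.K)}"
  proof (rule Z.count_dvd[OF HG assms(2)])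
    fix \<phi> n assume h: "\<phi> \<in> hom F G" and P: "inj_on (restrict \<phi> Z.K) W \<and> restrict \<phi> Z.K ` W = A"
      and n: "n \<in> normalizer G A"
    have nc: "n \<in> carrier G" using n Hc by auto
    have "inj_on (\<lambda>f. Z.cj n (\<phi> f)) W" using cjinj[OF nc h] P resW by simp
    moreover have "(\<lambda>f. Z.cj n (\<phi> f)) ` W = A" using cjW P resW nA[OF n] by metis
    ultimately show "inj_on (restrict (\<lambda>f. Z.cj n (\<phi> f)) Z.K) W \<and> restrict (\<lambda>f. Z.cj n (\<phi> f)) Z.K ` W = A"
      using resW by simp
  qed
  have e1: "{\<phi> \<in> hom F G. \<phi> \<in> extensional (carrier F) \<and> (\<lambda>\<rho>. inj_on \<rho> W \<and> \<rho> ` W \<subseteq> A) (restrict \<phi> Z.K)}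
    = {\<phi> \<in> hom F G. \<phi> \<in> extensional (carrier F) \<and> inj_on \<phi> W \<and> \<phi> ` W \<subseteq> A}"
    by (simp only: resW)
  have e2: "{\<phi> \<in> hom F G. \<phi> \<in> extensional (carrier F) \<and> (\<lambda>\<rho>. inj_on \<rho> W \<and> \<rho> ` W = A) (restrict \<phi> Z.K)}
    = {\<phi> \<in> hom F G. \<phi> \<in> extensional (carrier F) \<and> inj_on \<phi> W \<and> \<phi> ` W = A}"
    by (simp only: resW)
  show ?thesis using a b unfolding e1 e2 by (rule conjI)
qed

end
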